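(* For every $i\ge0$ there exist constants $c^0_i,c^1_i,\tilde c^1_i\in\mathbb C$ such that, with $z=z_1$, $$\Pi^0_i=c^0_i\,z^{n i}\frac{d^{n i}}{dz^{n i}}F(z),\qquad \Pi^0_i\log z+\Pi^1_i=c^1_i\,z^{n i}\frac{d^{n i}}{dz^{n i}}\big(F(z)\log z+\tilde G(z)\big)+\tilde c^1_i\,\Pi^0_i .$$
   Context: Let $\theta_i=z_i\,\partial/\partial z_i$. Fix an integer $n\ge1$ and constants $a_0\neq0,a_1,a_2$. Consider the system $L_1=-n\theta_1\theta_2+\theta_1^2-a_0z_1(\theta_1+a_1)(\theta_1+a_2)$, $L_2=\theta_2^{n}-(-1)^n z_2\,(n\theta_2-\theta_1)(n\theta_2-\theta_1+1)\cdots(n\theta_2-\theta_1+n-1)$. Let $\Pi^0$ be the solution holomorphic at $0$ with $\Pi^0(0)=1$ and, for $a=1,2$, $\Pi^a=\Pi^0\log z_a+(\text{holomorphic at }0)$ solutions. Expand $\Pi^0=\sum_{i\ge0}\Pi^0_i(z_1)z_2^i$ and $\Pi^a=\Pi^0\log z_a+\sum_{i\ge0}\Pi^a_i(z_1)z_2^i$. Let $F(z)={}_2F_1(a_1,a_2;1;a_0z)=\sum_{k\ge0}\frac{(a_1)_k(a_2)_k}{(k!)^2}(a_0z)^k$ (Pochhammer symbols $(a)_k=a(a+1)\cdots(a+k-1)$), and $\tilde G(z)=\sum_{k\ge1}\frac{(a_1)_k(a_2)_k}{(k!)^2}\Big[\sum_{j=1}^2\sum_{l=0}^{k-1}\big(\tfrac1{a_j+l}-\tfrac1{1+l}\big)\Big](a_0z)^k$,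 so that $F$ and $F\log z+\tilde G$ are solutions of $\theta^2y-a_0z(\theta+a_1)(\theta+a_2)y=0$, $\theta=z\,d/dz$. *)

theory Defs
  imports "HOL-Analysis.Analysis" "HOL-Computational_Algebra.Formal_Laurent_Series"
begin

(* A double power series  sum_{k,i} s k i * z1^k * z2^i  is represented by its
   coefficient array s :: nat => nat => complex  (k = exponent of z1, i = exponent of z2). *)
type_synonym ser2 = "nat \<Rightarrow> nat \<Rightarrow> complex"

(* A function of the form  p * log z1 + q * log z2 + g  with p, q, g double power series
   is represented by the triple (p, q, g). *)
type_synonym lser = "ser2 \<times> ser2 \<times> ser2"

definition holo0 :: "ser2 \<Rightarrow> bool" where
  "holo0 s \<longleftrightarrow> (\<exists>r>0. (\<lambda>(k,i). norm (s k i) * r ^ (k + i)) summable_on (UNIV :: (nat \<times> nat) set))"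

definition ladd :: "lser \<Rightarrow> lser \<Rightarrow> lser" where
  "ladd A B = (case A of (p,q,g) \<Rightarrow> case B of (p',q',g') \<Rightarrow>
     (\<lambda>k i. p k i + p' k i, \<lambda>k i. q k i + q' k i, \<lambda>k i. g k i + g' k i))"

definition lscale :: "complex \<Rightarrow> lser \<Rightarrow> lser" where
  "lscale c A = (case A of (p,q,g) \<Rightarrow> (\<lambda>k i. c * p k i, \<lambda>k i. c * q k i, \<lambda>k i. c * g k i))"

(* theta_1 = z1 d/dz1 :  theta_1 (p log z1 + q log z2 + g) = (theta_1 p) log z1 + (theta_1 q) log z2 + (p + theta_1 g) *)
definition th1 :: "lser \<Rightarrow> lser" where
  "th1 A = (case A of (p,q,g) \<Rightarrow>
     (\<lambda>k i. of_nat k * p k i, \<lambda>k i. of_nat k * q k i, \<lambda>k i. p k i + of_nat k * g k i))"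

definition th2 :: "lser \<Rightarrow> lser" where
  "th2 A = (case A of (p,q,g) \<Rightarrow>
     (\<lambda>k i. of_nat i * p k i, \<lambda>k i. of_nat i * q k i, \<lambda>k i. q k i + of_nat i * g k i))"

definition shift1 :: "ser2 \<Rightarrow> ser2" where
  "shift1 s = (\<lambda>k i. if k = 0 then 0 else s (k - 1) i)"
definition shift2 :: "ser2 \<Rightarrow> ser2" where
  "shift2 s = (\<lambda>k i. if i = 0 then 0 else s k (i - 1))"
definition mulz1 :: "lser \<Rightarrow> lser" where
  "mulz1 A = (case A of (p,q,g) \<Rightarrow> (shift1 p, shift1 q, shift1 g))"
definition mulz2 :: "lser \<Rightarrow> lser" where
  "mulz2 A = (case A of (p,q,g) \<Rightarrow> (shift2 p, shift2 q, shift2 g))"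

(* L1 = -n th1 th2 + th1^2 - a0 z1 (th1 + a1)(th1 + a2) *)
definition L1 :: "nat \<Rightarrow> complex \<Rightarrow> complex \<Rightarrow> complex \<Rightarrow> lser \<Rightarrow> lser" where
  "L1 n a0 a1 a2 A =
     ladd (ladd (lscale (- of_nat n) (th1 (th2 A))) (th1 (th1 A)))
          (lscale (- a0) (mulz1 (ladd (th1 (ladd (th1 A) (lscale a2 A)))
                                      (lscale a1 (ladd (th1 A) (lscale a2 A))))))"

fun prodop :: "nat \<Rightarrow> nat \<Rightarrow> lser \<Rightarrow> lser" where
  "prodop n 0 A = A"
| "prodop n (Suc m) A =
     (let B = prodop n m A in
      ladd (ladd (lscale (of_nat n) (th2 B)) (lscale (-1) (th1 B))) (lscale (of_nat m) B))"

(* L2 = th2^n - (-1)^n z2 (n th2 - th1)(n th2 - th1 + 1) ... (n th2 - th1 + n - 1) *)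
definition L2 :: "nat \<Rightarrow> lser \<Rightarrow> lser" where
  "L2 n A = ladd ((th2 ^^ n) A) (lscale (- ((-1) ^ n)) (mulz2 (prodop n n A)))"

definition lzero :: lser where
  "lzero = ((\<lambda>k i. 0), (\<lambda>k i. 0), (\<lambda>k i. 0))"

(* the hypergeometric series F(z) = 2F1(a1,a2;1;a0 z) *)
definition Fser :: "complex \<Rightarrow> complex \<Rightarrow> complex \<Rightarrow> complex fps" where
  "Fser a0 a1 a2 = Abs_fps (\<lambda>k. pochhammer a1 k * pochhammer a2 k / (fact k)^2 * a0 ^ k)"

(* The factor (a_j)_k * sum_{l<k} 1/(a_j+l) is written as
   sum_{l<k} prod_{m<k, m<>l} (a_j+m), which equals it whenever the paper's expression is defined
   and is its continuous extension otherwise. *)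
definition Gser :: "complex \<Rightarrow> complex \<Rightarrow> complex \<Rightarrow> complex fps" where
  "Gser a0 a1 a2 = Abs_fps (\<lambda>k. a0 ^ k / (fact k)^2 *
     (\<Sum>l<k. (\<Prod>m\<in>{..<k} - {l}. a1 + of_nat m) * pochhammer a2 k
            + pochhammer a1 k * (\<Prod>m\<in>{..<k} - {l}. a2 + of_nat m)
            - 2 * pochhammer a1 k * pochhammer a2 k / (1 + of_nat l)))"

(* Functions A * log z + B of one variable, A, B formal Laurent series, represented by (A, B).
   d/dz (A log z + B) = A' log z + (A / z + B'). *)
definition dlog :: "complex fls \<times> complex fls \<Rightarrow> complex fls \<times> complex fls" where
  "dlog P = (fls_deriv (fst P), fst P * fls_X_inv + fls_deriv (snd P))"

definition zdlog :: "nat \<Rightarrow> complex fls \<times> complex fls \<Rightarrow> complex fls \<times> complex fls" where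
  "zdlog m P = (fls_X ^ m * fst ((dlog ^^ m) P), fls_X ^ m * snd ((dlog ^^ m) P))"

end

theory Submission
  imports Defs
begin


fun ee :: "nat \<Rightarrow> complex \<Rightarrow> complex" where
  "ee 0 x = 1"
| "ee (Suc m) x = ee m x * (x - of_nat m)"

fun ed :: "nat \<Rightarrow> complex \<Rightarrow> complex" where
  "ed 0 x = 0"
| "ed (Suc m) x = ed m x * (x - of_nat m) + ee m x"

lemma zdlog_step:
  "fls_nth (fst (zdlog (Suc m) P)) t = (of_int t - of_nat m) * fls_nth (fst (zdlog m P)) t"
  "fls_nth (snd (zdlog (Suc m) P)) t = fls_nth (fst (zdlog m P)) t + (of_int t - of_nat m) * fls_nth (snd (zdlog m P)) t"
proof -
  obtain a b where ab: "(dlog ^^ m) P = (a, b)" by (cases "(dlog ^^ m) P") auto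
  have s: "(dlog ^^ Suc m) P = (fls_deriv a, a * fls_X_inv + fls_deriv b)"
    using ab by (simp add: dlog_def)
  show "fls_nth (fst (zdlog (Suc m) P)) t = (of_int t - of_nat m) * fls_nth (fst (zdlog m P)) t"
    unfolding zdlog_def using s ab
    by (simp only: fls_X_power_times_conv_shift fst_conv snd_conv) (simp add: algebra_simps)
  show "fls_nth (snd (zdlog (Suc m) P)) t = fls_nth (fst (zdlog m P)) t + (of_int t - of_nat m) * fls_nth (snd (zdlog m P)) t"
    unfolding zdlog_def using s ab
    by (simp only: fls_X_power_times_conv_shift fls_X_inv_times_conv_shift fst_conv snd_conv) (simp add: algebra_simps)
qed

lemma zdlog_coeffs:
  "fst (zdlog m (fps_to_fls (Abs_fps a), fps_to_fls (Abs_fps b))) = fps_to_fls (Abs_fps (\<lambda>k. ee m (of_nat k) * a k))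
 \<and> snd (zdlog m (fps_to_fls (Abs_fps a), fps_to_fls (Abs_fps b))) = fps_to_fls (Abs_fps (\<lambda>k. ee m (of_nat k) * b k + ed m (of_nat k) * a k))"
proof (induction m)
  case 0
  then show ?case by (simp add: zdlog_def)
next
  case (Suc m)
  show ?case
  proof (intro conjI)
    show "fst (zdlog (Suc m) (fps_to_fls (Abs_fps a), fps_to_fls (Abs_fps b))) = fps_to_fls (Abs_fps (\<lambda>k. ee (Suc m) (of_nat k) * a k))"
      unfolding fls_eq_iff
    proof
      fix t
      show "fls_nth (fst (zdlog (Suc m) (fps_to_fls (Abs_fps a), fps_to_fls (Abs_fps b)))) t = fls_nth (fps_to_fls (Abs_fps (\<lambda>k. ee (Suc m) (of_nat k) * a k))) t"
        unfolding zdlog_step using Suc.IH by (cases "t < 0") (auto simp: algebra_simps)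
    qed
    show "snd (zdlog (Suc m) (fps_to_fls (Abs_fps a), fps_to_fls (Abs_fps b))) = fps_to_fls (Abs_fps (\<lambda>k. ee (Suc m) (of_nat k) * b k + ed (Suc m) (of_nat k) * a k))"
      unfolding fls_eq_iff
    proof
      fix t
      show "fls_nth (snd (zdlog (Suc m) (fps_to_fls (Abs_fps a), fps_to_fls (Abs_fps b)))) t = fls_nth (fps_to_fls (Abs_fps (\<lambda>k. ee (Suc m) (of_nat k) * b k + ed (Suc m) (of_nat k) * a k))) t"
        unfolding zdlog_step using Suc.IH by (cases "t < 0") (auto simp: algebra_simps)
    qed
  qed
qed

lemma ee_zero: "k < m \<Longrightarrow> ee m (of_nat k) = 0"
  by (induction m) (auto simp: less_Suc_eq)

lemma deriv_pow_nth: "((fps_deriv ^^ m) F) $ j = ee m (of_nat (j + m)) * F $ (j + m)"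
proof (induction m arbitrary: j)
  case 0 then show ?case by simp
next
  case (Suc m)
  have "((fps_deriv ^^ Suc m) F) $ j = of_nat (j+1) * ((fps_deriv ^^ m) F) $ (j+1)" by simp
  also have "\<dots> = of_nat (j+1) * ee m (of_nat (j + 1 + m)) * F $ (j + 1 + m)" by (simp only: Suc[of "j+1"] mult.assoc)
  also have "\<dots> = ee (Suc m) (of_nat (j + Suc m)) * F $ (j + Suc m)"
    by (simp add: algebra_simps)
  finally show ?case .
qed

lemma zd_fps_nth: "(fps_X ^ m * (fps_deriv ^^ m) F) $ k = ee m (of_nat k) * F $ k"
  by (cases "m \<le> k") (auto simp: fps_X_power_mult_nth deriv_pow_nth ee_zero)



fun pp :: "complex \<Rightarrow> nat \<Rightarrow> complex" where
  "pp x 0 = 1"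
| "pp x (Suc m) = (x + of_nat m) * pp x m"

fun ss :: "complex \<Rightarrow> nat \<Rightarrow> complex" where
  "ss x 0 = 0"
| "ss x (Suc m) = (x + of_nat m) * ss x m - pp x m"

lemma prodop_form:
  "prodop n m (p, \<lambda>k i. 0, g) =
    (\<lambda>k i. pp (of_nat n * of_nat i - of_nat k) m * p k i, \<lambda>k i. 0,
     \<lambda>k i. pp (of_nat n * of_nat i - of_nat k) m * g k i + ss (of_nat n * of_nat i - of_nat k) m * p k i)"
proof (induction m)
  case 0 then show ?case by simp
next
  case (Suc m)
  show ?case
    by (simp add: Suc Let_def ladd_def lscale_def th1_def th2_def algebra_simps)
qed

lemma th2_pow:
  "(th2 ^^ m) (p, \<lambda>k i. 0, g) = (\<lambda>k i. of_nat i ^ m * p k i, \<lambda>k i. 0, \<lambda>k i. of_nat i ^ m * g k i)"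
  by (induction m) (simp_all add: th2_def algebra_simps)

lemma L2_extract:
  assumes "L2 n (p, \<lambda>k i. 0, g) = lzero"
  shows "of_nat (Suc i) ^ n * p k (Suc i) = (-1) ^ n * (pp (of_nat n * of_nat i - of_nat k) n * p k i)"
    and "of_nat (Suc i) ^ n * g k (Suc i) = (-1) ^ n * (pp (of_nat n * of_nat i - of_nat k) n * g k i
            + ss (of_nat n * of_nat i - of_nat k) n * p k i)"
proof -
  have e: "L2 n (p, \<lambda>k i. 0, g) =
    (\<lambda>k i. of_nat i ^ n * p k i - (-1)^n * (if i = 0 then 0 else pp (of_nat n * of_nat (i-1) - of_nat k) n * p k (i-1)),
     \<lambda>k i. 0,
     \<lambda>k i. of_nat i ^ n * g k i - (-1)^n * (if i = 0 then 0 else pp (of_nat n * of_nat (i-1) - of_nat k) n * g k (i-1)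
            + ss (of_nat n * of_nat (i-1) - of_nat k) n * p k (i-1)))"
    by (simp add: L2_def prodop_form th2_pow ladd_def lscale_def mulz2_def shift2_def fun_eq_iff)
  have "fst (L2 n (p, \<lambda>k i. 0, g)) k (Suc i) = 0" "snd (snd (L2 n (p, \<lambda>k i. 0, g))) k (Suc i) = 0"
    using assms by (simp_all add: lzero_def)
  then show "of_nat (Suc i) ^ n * p k (Suc i) = (-1) ^ n * (pp (of_nat n * of_nat i - of_nat k) n * p k i)"
    and "of_nat (Suc i) ^ n * g k (Suc i) = (-1) ^ n * (pp (of_nat n * of_nat i - of_nat k) n * g k i
            + ss (of_nat n * of_nat i - of_nat k) n * p k i)"
    unfolding e by simp_all
qed

lemma L1_extract:
  assumes "L1 n a0 a1 a2 (p, \<lambda>k i. 0, g) = lzero"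
  shows "2 * of_nat (Suc k) * p (Suc k) 0 + of_nat (Suc k) ^ 2 * g (Suc k) 0
     = a0 * ((2 * of_nat k + a1 + a2) * p k 0 + (of_nat k + a1) * (of_nat k + a2) * g k 0)"
proof -
  have "snd (snd (L1 n a0 a1 a2 (p, \<lambda>k i. 0, g))) (Suc k) 0 = 0"
    using assms by (simp add: lzero_def)
  then show ?thesis
    by (simp add: L1_def ladd_def lscale_def th1_def th2_def mulz1_def shift1_def algebra_simps power2_eq_square)
qed



definition Sg :: "complex \<Rightarrow> complex \<Rightarrow> nat \<Rightarrow> complex" where
  "Sg a1 a2 k = (\<Sum>l<k. (\<Prod>m\<in>{..<k} - {l}. a1 + of_nat m) * pochhammer a2 k
            + pochhammer a1 k * (\<Prod>m\<in>{..<k} - {l}. a2 + of_nat m)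
            - 2 * pochhammer a1 k * pochhammer a2 k / (1 + of_nat l))"

lemma prod_minus_Suc:
  assumes "l < k"
  shows "(\<Prod>m\<in>{..<Suc k} - {l}. a + of_nat m) = (\<Prod>m\<in>{..<k} - {l}. a + of_nat m) * (a + of_nat k :: complex)"
proof -
  have "{..<Suc k} - {l} = insert k ({..<k} - {l})" using assms by auto
  then show ?thesis by (simp add: mult.commute)
qed

lemma prod_minus_last: "(\<Prod>m\<in>{..<Suc k} - {k}. a + of_nat m) = pochhammer (a::complex) k"
proof -
  have "{..<Suc k} - {k} = {0..<k}" by auto
  then show ?thesis by (simp add: pochhammer_prod)
qed

lemma one_plus_nz: "(1 + of_nat x :: complex) \<noteq> 0"
  by (metis of_nat_Suc of_nat_eq_0_iff nat.distinct(1) add.commute)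

lemma fact_Suc_c: "(fact (Suc k) :: complex) = (1 + of_nat k) * fact k"
  by (simp add: fact_Suc)

lemma Sg_Suc:
  "Sg a1 a2 (Suc k) = (a1 + of_nat k) * (a2 + of_nat k) * Sg a1 a2 k
     + (a1 + of_nat k + a2 + of_nat k) * pochhammer a1 k * pochhammer a2 k
     - 2 * pochhammer a1 (Suc k) * pochhammer a2 (Suc k) / (1 + of_nat k)"
proof -
  have "Sg a1 a2 (Suc k) = (\<Sum>l<k. (a1 + of_nat k) * (a2 + of_nat k) *
           ((\<Prod>m\<in>{..<k} - {l}. a1 + of_nat m) * pochhammer a2 k
            + pochhammer a1 k * (\<Prod>m\<in>{..<k} - {l}. a2 + of_nat m)
            - 2 * pochhammer a1 k * pochhammer a2 k / (1 + of_nat l)))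
        + (pochhammer a1 k * pochhammer a2 (Suc k) + pochhammer a1 (Suc k) * pochhammer a2 k
            - 2 * pochhammer a1 (Suc k) * pochhammer a2 (Suc k) / (1 + of_nat k))"
    unfolding Sg_def sum.lessThan_Suc
    by (intro arg_cong2[where f="(+)"] sum.cong refl)
       (auto simp: prod_minus_Suc prod_minus_last pochhammer_Suc one_plus_nz field_simps)
  also have "\<dots> = (a1 + of_nat k) * (a2 + of_nat k) * Sg a1 a2 k
     + (a1 + of_nat k + a2 + of_nat k) * pochhammer a1 k * pochhammer a2 k
     - 2 * pochhammer a1 (Suc k) * pochhammer a2 (Suc k) / (1 + of_nat k)"
    unfolding Sg_def sum_distrib_left[symmetric] by (simp add: pochhammer_Suc algebra_simps)
  finally show ?thesis .
qed

lemma Gser_nth: "Gser a0 a1 a2 $ k = a0 ^ k / (fact k)^2 * Sg a1 a2 k"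
  by (simp add: Gser_def Sg_def)

lemma Fser_nth: "Fser a0 a1 a2 $ k = pochhammer a1 k * pochhammer a2 k / (fact k)^2 * a0 ^ k"
  by (simp add: Fser_def)

lemma F_rec: "of_nat (Suc k) ^ 2 * Fser a0 a1 a2 $ Suc k = a0 * (of_nat k + a1) * (of_nat k + a2) * Fser a0 a1 a2 $ k"
proof -
  define c where "c = (1 + of_nat k :: complex)"
  define F where "F = (fact k :: complex)"
  have nz: "c \<noteq> 0" "F \<noteq> 0" unfolding c_def F_def using one_plus_nz by auto
  have hc: "of_nat (Suc k) = c" unfolding c_def by simp
  show ?thesis
    unfolding Fser_nth fact_Suc_c pochhammer_Suc hc c_def[symmetric] F_def[symmetric]
    using nz by (simp add: field_simps power2_eq_square)
qed

lemma G_rec: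
  "2 * of_nat (Suc k) * Fser a0 a1 a2 $ Suc k + of_nat (Suc k) ^ 2 * Gser a0 a1 a2 $ Suc k
     = a0 * ((2 * of_nat k + a1 + a2) * Fser a0 a1 a2 $ k + (of_nat k + a1) * (of_nat k + a2) * Gser a0 a1 a2 $ k)"
proof -
  define c where "c = (1 + of_nat k :: complex)"
  define F where "F = (fact k :: complex)"
  have nz: "c \<noteq> 0" "F \<noteq> 0" unfolding c_def F_def using one_plus_nz by auto
  have hc: "of_nat (Suc k) = c" unfolding c_def by simp
  show ?thesis
    unfolding Fser_nth Gser_nth Sg_Suc fact_Suc_c pochhammer_Suc hc c_def[symmetric] F_def[symmetric]
    using nz by (simp add: field_simps power2_eq_square)
qed



lemma ee_shift:
  "ee (N + m) x = ee N x * ee m (x - of_nat N) \<and> ed (N + m) x = ed N x * ee m (x - of_nat N) + ee N x * ed m (x - of_nat N)"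
  by (induction m) (simp_all add: algebra_simps)

lemma pp_ee: "(-1) ^ m * pp (- y) m = ee m y \<and> (-1) ^ m * ss (- y) m = ed m y"
  by (induction m) (simp_all add: algebra_simps)

lemma zdlog_fps:
  "fst (zdlog m (fps_to_fls A, fps_to_fls B)) = fps_to_fls (Abs_fps (\<lambda>k. ee m (of_nat k) * A $ k))"
  "snd (zdlog m (fps_to_fls A, fps_to_fls B)) = fps_to_fls (Abs_fps (\<lambda>k. ee m (of_nat k) * B $ k + ed m (of_nat k) * A $ k))"
  using zdlog_coeffs[of m "($) A" "($) B"] by (simp_all add: fps_nth_inverse)

lemma main_claim:
  fixes n :: nat and a0 a1 a2 :: complex and P0 H1 :: ser2
  assumes L1a: "L1 n a0 a1 a2 (\<lambda>k i. 0, \<lambda>k i. 0, P0) = lzero"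
    and L2a: "L2 n (\<lambda>k i. 0, \<lambda>k i. 0, P0) = lzero"
    and L1b: "L1 n a0 a1 a2 (P0, \<lambda>k i. 0, H1) = lzero"
    and L2b: "L2 n (P0, \<lambda>k i. 0, H1) = lzero"
    and P00: "P0 0 0 = 1"
  shows "\<exists>c1 c1'. \<forall>k. P0 k i = c1 * (ee (n*i) (of_nat k) * Fser a0 a1 a2 $ k)
      \<and> H1 k i = c1 * (ee (n*i) (of_nat k) * Gser a0 a1 a2 $ k + ed (n*i) (of_nat k) * Fser a0 a1 a2 $ k) + c1' * P0 k i"
proof (induction i)
  case 0
  define f where "f = (\<lambda>k. Fser a0 a1 a2 $ k)"
  define g where "g = (\<lambda>k. Gser a0 a1 a2 $ k)"
  have sq: "(of_nat (Suc k) ^ 2 :: complex) \<noteq> 0" for k using one_plus_nz[of k] by simp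
  have P: "P0 k 0 = f k" for k
  proof (induction k)
    case 0 then show ?case by (simp add: f_def Fser_def P00)
  next
    case (Suc k)
    have "of_nat (Suc k) ^ 2 * P0 (Suc k) 0 = a0 * (of_nat k + a1) * (of_nat k + a2) * P0 k 0"
      using L1_extract[OF L1a, of k] by simp
    also have "\<dots> = of_nat (Suc k) ^ 2 * f (Suc k)" using F_rec[of k a0 a1 a2] Suc by (simp add: f_def)
    finally show ?case using sq[of k] by simp
  qed
  define c where "c = H1 0 0"
  have H: "H1 k 0 = g k + c * f k" for k
  proof (induction k)
    case 0 then show ?case by (simp add: f_def Fser_def g_def Gser_def c_def)
  next
    case (Suc k)
    have "of_nat (Suc k) ^ 2 * H1 (Suc k) 0 = a0 * ((2 * of_nat k + a1 + a2) * f k + (of_nat k + a1) * (of_nat k + a2) * H1 k 0) - 2 * of_nat (Suc k) * f (Suc k)"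
      using L1_extract[OF L1b, of k] P by (simp add: algebra_simps)
    also have "\<dots> = of_nat (Suc k) ^ 2 * (g (Suc k) + c * f (Suc k))"
      using G_rec[of k a0 a1 a2] F_rec[of k a0 a1 a2] Suc unfolding f_def g_def
      by (simp add: algebra_simps)
    finally show ?case using sq[of k] by simp
  qed
  show ?case
    by (rule exI[of _ 1], rule exI[of _ c]) (simp add: P H f_def g_def)
next
  case (Suc i)
  then obtain c1 c1' where IH: "\<And>k. P0 k i = c1 * (ee (n*i) (of_nat k) * Fser a0 a1 a2 $ k)"
     "\<And>k. H1 k i = c1 * (ee (n*i) (of_nat k) * Gser a0 a1 a2 $ k + ed (n*i) (of_nat k) * Fser a0 a1 a2 $ k) + c1' * P0 k i"
    by blast
  define D where "D = (of_nat (Suc i) ^ n :: complex)"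
  have Dnz: "D \<noteq> 0" using one_plus_nz[of i] by (simp add: D_def)
  have P: "P0 k (Suc i) = c1 / D * (ee (n*Suc i) (of_nat k) * Fser a0 a1 a2 $ k)" for k
  proof -
    let ?y = "of_nat k - of_nat (n*i) :: complex"
    have x: "of_nat n * of_nat i - of_nat k = - ?y" by simp
    have "D * P0 k (Suc i) = ee n ?y * P0 k i"
      using L2_extract(2)[OF L2a, of i k] pp_ee[of n ?y] unfolding x D_def by simp
    also have "\<dots> = c1 * (ee (n*Suc i) (of_nat k) * Fser a0 a1 a2 $ k)"
      using IH(1)[of k] ee_shift[of "n*i" n "of_nat k"] by (simp add: algebra_simps)
    finally show ?thesis using Dnz by (simp add: field_simps)
  qed
  have H: "H1 k (Suc i) = c1 / D * (ee (n*Suc i) (of_nat k) * Gser a0 a1 a2 $ k + ed (n*Suc i) (of_nat k) * Fser a0 a1 a2 $ k) + c1' * P0 k (Suc i)" for k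
  proof -
    let ?y = "of_nat k - of_nat (n*i) :: complex"
    have x: "of_nat n * of_nat i - of_nat k = - ?y" by simp
    have "D * H1 k (Suc i) = ee n ?y * H1 k i + ed n ?y * P0 k i"
      using L2_extract(2)[OF L2b, of i k] pp_ee[of n ?y] unfolding x D_def by (simp add: algebra_simps)
    also have "\<dots> = D * (c1 / D * (ee (n*Suc i) (of_nat k) * Gser a0 a1 a2 $ k + ed (n*Suc i) (of_nat k) * Fser a0 a1 a2 $ k) + c1' * P0 k (Suc i))"
      using IH(1)[of k] IH(2)[of k] ee_shift[of "n*i" n "of_nat k"] P[of k] Dnz
      by (simp add: algebra_simps)
    finally show ?thesis using Dnz by simp
  qed
  show ?case using P H by blast
qed

theorem proposition4:
  fixes n :: nat and a0 a1 a2 :: complex and P0 H1 :: ser2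
  assumes "n \<ge> 1" and "a0 \<noteq> 0"
    and "holo0 P0" and "P0 0 0 = 1"
    and "L1 n a0 a1 a2 (\<lambda>k i. 0, \<lambda>k i. 0, P0) = lzero"
    and "L2 n (\<lambda>k i. 0, \<lambda>k i. 0, P0) = lzero"
    and "holo0 H1"
    and "L1 n a0 a1 a2 (P0, \<lambda>k i. 0, H1) = lzero"
    and "L2 n (P0, \<lambda>k i. 0, H1) = lzero"
  shows "\<forall>i. \<exists>c0 c1 c1' :: complex.
     Abs_fps (\<lambda>k. P0 k i) = fps_const c0 * fps_X ^ (n * i) * (fps_deriv ^^ (n * i)) (Fser a0 a1 a2)
   \<and> (fps_to_fls (Abs_fps (\<lambda>k. P0 k i)), fps_to_fls (Abs_fps (\<lambda>k. H1 k i)))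
       = (fls_const c1 * fst (zdlog (n * i) (fps_to_fls (Fser a0 a1 a2), fps_to_fls (Gser a0 a1 a2))),
          fls_const c1 * snd (zdlog (n * i) (fps_to_fls (Fser a0 a1 a2), fps_to_fls (Gser a0 a1 a2)))
          + fls_const c1' * fps_to_fls (Abs_fps (\<lambda>k. P0 k i)))"
  proof
  fix i
  obtain c1 c1' where C: "\<And>k. P0 k i = c1 * (ee (n*i) (of_nat k) * Fser a0 a1 a2 $ k)"
     "\<And>k. H1 k i = c1 * (ee (n*i) (of_nat k) * Gser a0 a1 a2 $ k + ed (n*i) (of_nat k) * Fser a0 a1 a2 $ k) + c1' * P0 k i"
    using main_claim[OF assms(5) assms(6) assms(8) assms(9) assms(4), of i] by blast
  have 1: "Abs_fps (\<lambda>k. P0 k i) = fps_const c1 * fps_X ^ (n * i) * (fps_deriv ^^ (n * i)) (Fser a0 a1 a2)"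
    by (simp add: fps_eq_iff mult.assoc zd_fps_nth C(1))
  have 2: "(fps_to_fls (Abs_fps (\<lambda>k. P0 k i)), fps_to_fls (Abs_fps (\<lambda>k. H1 k i)))
       = (fls_const c1 * fst (zdlog (n * i) (fps_to_fls (Fser a0 a1 a2), fps_to_fls (Gser a0 a1 a2))),
          fls_const c1 * snd (zdlog (n * i) (fps_to_fls (Fser a0 a1 a2), fps_to_fls (Gser a0 a1 a2)))
          + fls_const c1' * fps_to_fls (Abs_fps (\<lambda>k. P0 k i)))"
    unfolding zdlog_fps by (auto simp: fls_eq_iff C algebra_simps)
  show "\<exists>c0 c1 c1' :: complex.
     Abs_fps (\<lambda>k. P0 k i) = fps_const c0 * fps_X ^ (n * i) * (fps_deriv ^^ (n * i)) (Fser a0 a1 a2)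
   \<and> (fps_to_fls (Abs_fps (\<lambda>k. P0 k i)), fps_to_fls (Abs_fps (\<lambda>k. H1 k i)))
       = (fls_const c1 * fst (zdlog (n * i) (fps_to_fls (Fser a0 a1 a2), fps_to_fls (Gser a0 a1 a2))),
          fls_const c1 * snd (zdlog (n * i) (fps_to_fls (Fser a0 a1 a2), fps_to_fls (Gser a0 a1 a2)))
          + fls_const c1' * fps_to_fls (Abs_fps (\<lambda>k. P0 k i)))"
    using 1 2 by blast
qed

end
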